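(* Let $S$ be a nonempty set of places of $\mathbb{Q}$, let $F$ be a number field, and let $T=M_F(S)$. Then the restriction map $\rho:\mathcal J^*(\mathbb{Q},S)\to\mathcal J^*(F,T)$, $\rho(c)=c|_{\mathcal J(F,T)}$, is a vector space isomorphism.
   Context: All fields lie in a fixed algebraic closure $\overline{\mathbb{Q}}$. For a number field $F$, a nonempty set $S$ of places of $F$, and a finite extension $K$ of $F$, $M_K(S)$ denotes the set of places of $K$ dividing a place in $S$. Define $\mathcal J(F,S)=\{(K,v): K\supseteq F,\ [K:F]<\infty,\ v\in M_K(S)\}$. A map $c:\mathcal J(F,S)\to\mathbb{R}$ is consistent if $c(K,v)=\sum_{w\mid v}c(L,w)$ for all $(K,v)\in\mathcal J(F,S)$ and all finite extensions $L/K$, the sum running over places $w$ of $L$ dividing $v$. $\mathcal J^*(F,S)$ is the real vector space of consistent maps $\mathcal J(F,S)\to\mathbb{R}$ under pointwise addition and scalar multiplication. *)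

theory Defs
  imports Complex_Main
begin

text \<open>The fixed algebraic closure of Q is realised inside the complex numbers: all
fields are subfields of the complex numbers, and finite extensions of Q inside the
complex numbers are exactly the number fields contained in the algebraic closure.\<close>

definition subfield :: "complex set \<Rightarrow> bool" where
  "subfield K \<longleftrightarrow> 0 \<in> K \<and> 1 \<in> K \<and> (\<forall>x\<in>K. \<forall>y\<in>K. x + y \<in> K \<and> x - y \<in> K \<and> x * y \<in> K)
     \<and> (\<forall>x\<in>K. x \<noteq> 0 \<longrightarrow> inverse x \<in> K)"

definition finite_ext :: "complex set \<Rightarrow> complex set \<Rightarrow> bool" where
  "finite_ext K L \<longleftrightarrow> subfield K \<and> subfield L \<and> K \<subseteq> L \<and>
     (\<exists>B. finite B \<and> B \<subseteq> L \<and> L \<subseteq> {\<Sum>b\<in>B. a b * b | a. \<forall>b\<in>B. a b \<in> K})"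

definition number_field :: "complex set \<Rightarrow> bool" where
  "number_field F \<longleftrightarrow> finite_ext \<rat> F"

text \<open>Nontrivial absolute values on K (taken to be 0 outside K, so that they are
determined by their values on K).\<close>
definition abs_val :: "complex set \<Rightarrow> (complex \<Rightarrow> real) \<Rightarrow> bool" where
  "abs_val K f \<longleftrightarrow>
     (\<forall>x. x \<notin> K \<longrightarrow> f x = 0) \<and>
     (\<forall>x\<in>K. f x \<ge> 0 \<and> (f x = 0 \<longleftrightarrow> x = 0)) \<and>
     (\<forall>x\<in>K. \<forall>y\<in>K. f (x * y) = f x * f y) \<and>
     (\<forall>x\<in>K. \<forall>y\<in>K. f (x + y) \<le> f x + f y) \<and>
     (\<exists>x\<in>K. x \<noteq> 0 \<and> f x \<noteq> 1)"

definition place_of :: "complex set \<Rightarrow> (complex \<Rightarrow> real) \<Rightarrow> (complex \<Rightarrow> real) set" where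
  "place_of K f = {g. abs_val K g \<and> (\<exists>t>0. \<forall>x\<in>K. g x = f x powr t)}"

definition places :: "complex set \<Rightarrow> (complex \<Rightarrow> real) set set" where
  "places K = {place_of K f | f. abs_val K f}"

definition place_divides :: "complex set \<Rightarrow> (complex \<Rightarrow> real) set \<Rightarrow> (complex \<Rightarrow> real) set \<Rightarrow> bool" where
  "place_divides K w v \<longleftrightarrow> (\<exists>g\<in>w. (\<lambda>x. if x \<in> K then g x else 0) \<in> v)"

definition M :: "complex set \<Rightarrow> complex set \<Rightarrow> (complex \<Rightarrow> real) set set \<Rightarrow> (complex \<Rightarrow> real) set set" where
  "M F K S = {w \<in> places K. \<exists>v\<in>S. place_divides F w v}"

definition JJ :: "complex set \<Rightarrow> (complex \<Rightarrow> real) set set \<Rightarrow> (complex set \<times> (complex \<Rightarrow> real) set) set" where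
  "JJ F S = {(K, v). finite_ext F K \<and> v \<in> M F K S}"

text \<open>Consistent maps J(F,S) -> R, represented as functions on all pairs that vanish
outside J(F,S) (so pointwise operations give the vector space structure).\<close>
definition consistent :: "complex set \<Rightarrow> (complex \<Rightarrow> real) set set \<Rightarrow> (complex set \<times> (complex \<Rightarrow> real) set \<Rightarrow> real) \<Rightarrow> bool" where
  "consistent F S c \<longleftrightarrow>
     (\<forall>K v L. (K, v) \<in> JJ F S \<and> finite_ext K L \<longrightarrow>
        c (K, v) = (\<Sum>w\<in>{w \<in> places L. place_divides K w v}. c (L, w)))"

definition Jstar :: "complex set \<Rightarrow> (complex \<Rightarrow> real) set set \<Rightarrow> (complex set \<times> (complex \<Rightarrow> real) set \<Rightarrow> real) set" where
  "Jstar F S = {c. consistent F S c \<and> (\<forall>p. p \<notin> JJ F S \<longrightarrow> c p = 0)}"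

definition restr :: "complex set \<Rightarrow> (complex \<Rightarrow> real) set set \<Rightarrow> (complex set \<times> (complex \<Rightarrow> real) set \<Rightarrow> real) \<Rightarrow> (complex set \<times> (complex \<Rightarrow> real) set \<Rightarrow> real)" where
  "restr F T c = (\<lambda>p. if p \<in> JJ F T then c p else 0)"

end

theory Submission
  imports Defs
begin


lemma sf_0: "subfield K \<Longrightarrow> 0 \<in> K" by (simp add: subfield_def)
lemma sf_1: "subfield K \<Longrightarrow> 1 \<in> K" by (simp add: subfield_def)
lemma sf_add: "subfield K \<Longrightarrow> x \<in> K \<Longrightarrow> y \<in> K \<Longrightarrow> x + y \<in> K" by (simp add: subfield_def)
lemma sf_diff: "subfield K \<Longrightarrow> x \<in> K \<Longrightarrow> y \<in> K \<Longrightarrow> x - y \<in> K" by (simp add: subfield_def)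
lemma sf_mult: "subfield K \<Longrightarrow> x \<in> K \<Longrightarrow> y \<in> K \<Longrightarrow> x * y \<in> K" by (simp add: subfield_def)
lemma sf_inv: "subfield K \<Longrightarrow> x \<in> K \<Longrightarrow> inverse x \<in> K"
  by (cases "x = 0") (auto simp add: subfield_def)
lemma sf_uminus: "subfield K \<Longrightarrow> x \<in> K \<Longrightarrow> - x \<in> K"
  using sf_diff[of K 0 x] sf_0 by simp
lemma sf_divide: "subfield K \<Longrightarrow> x \<in> K \<Longrightarrow> y \<in> K \<Longrightarrow> x / y \<in> K"
  by (simp add: divide_inverse sf_mult sf_inv)
lemma sf_power: "subfield K \<Longrightarrow> x \<in> K \<Longrightarrow> x ^ n \<in> K"
  by (induction n) (auto simp: sf_1 sf_mult)
lemma sf_sum: "subfield K \<Longrightarrow> (\<And>i. i \<in> I \<Longrightarrow> f i \<in> K) \<Longrightarrow> sum f I \<in> K"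
  by (induction I rule: infinite_finite_induct) (auto simp: sf_0 sf_add)
lemma sf_of_nat: "subfield K \<Longrightarrow> of_nat n \<in> K"
  by (induction n) (auto simp: sf_0 sf_1 sf_add)
lemma sf_of_int: assumes K: "subfield K" shows "of_int n \<in> K"
proof (cases "n \<ge> 0")
  case True
  then have "(of_int n :: complex) = of_nat (nat n)" by simp
  then show ?thesis using sf_of_nat[OF K, of "nat n"] by simp
next
  case False
  have "of_int n = - (of_nat (nat (- n)) :: complex)" using False by simp
  then show ?thesis using sf_uminus[OF K sf_of_nat[OF K]] by simp
qed
lemma sf_Rats: "subfield K \<Longrightarrow> \<rat> \<subseteq> K"
proof
  fix x :: complex assume K: "subfield K" and "x \<in> \<rat>"
  then obtain a b where "x = of_int a / of_int b" using Rats_cases' by metis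
  then show "x \<in> K" using sf_divide[OF K sf_of_int[OF K] sf_of_int[OF K]] by simp
qed
lemma sf_UNIV: "subfield UNIV" by (simp add: subfield_def)
lemma sf_Rats_sf: "subfield \<rat>"
  unfolding subfield_def by auto

definition kspan :: "complex set \<Rightarrow> complex set \<Rightarrow> complex set" where
  "kspan K B = {\<Sum>b\<in>B. a b * b | a. \<forall>b\<in>B. a b \<in> K}"

lemma finite_ext_kspan: "finite_ext K L \<longleftrightarrow> subfield K \<and> subfield L \<and> K \<subseteq> L \<and> (\<exists>B. finite B \<and> B \<subseteq> L \<and> L \<subseteq> kspan K B)"
  unfolding finite_ext_def kspan_def by simp

lemma kspan_0: "subfield K \<Longrightarrow> 0 \<in> kspan K B"
  unfolding kspan_def by (rule CollectI, rule exI[of _ "\<lambda>_. 0"]) (simp add: sf_0)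

lemma kspan_add: "x \<in> kspan K B \<Longrightarrow> y \<in> kspan K B \<Longrightarrow> subfield K \<Longrightarrow> x + y \<in> kspan K B"
  unfolding kspan_def
proof (elim CollectE exE conjE, intro CollectI)
  fix a a' assume "x = (\<Sum>b\<in>B. a b * b)" "\<forall>b\<in>B. a b \<in> K" "y = (\<Sum>b\<in>B. a' b * b)" "\<forall>b\<in>B. a' b \<in> K" "subfield K"
  then show "\<exists>c. x + y = (\<Sum>b\<in>B. c b * b) \<and> (\<forall>b\<in>B. c b \<in> K)"
    by (intro exI[of _ "\<lambda>b. a b + a' b"]) (auto simp: sum.distrib distrib_right sf_add)
qed

lemma kspan_scale: "x \<in> kspan K B \<Longrightarrow> k \<in> K \<Longrightarrow> subfield K \<Longrightarrow> k * x \<in> kspan K B"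
  unfolding kspan_def
proof (elim CollectE exE conjE, intro CollectI)
  fix a assume "x = (\<Sum>b\<in>B. a b * b)" "\<forall>b\<in>B. a b \<in> K" "subfield K" "k \<in> K"
  then show "\<exists>c. k * x = (\<Sum>b\<in>B. c b * b) \<and> (\<forall>b\<in>B. c b \<in> K)"
    by (intro exI[of _ "\<lambda>b. k * a b"]) (auto simp: sum_distrib_left mult.assoc sf_mult)
qed

lemma kspan_sum: "subfield K \<Longrightarrow> (\<And>i. i \<in> I \<Longrightarrow> f i \<in> kspan K B) \<Longrightarrow> sum f I \<in> kspan K B"
  by (induction I rule: infinite_finite_induct) (auto simp: kspan_0 kspan_add)

lemma kspan_base: "finite B \<Longrightarrow> subfield K \<Longrightarrow> c \<in> B \<Longrightarrow> c \<in> kspan K B"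
  unfolding kspan_def
proof (intro CollectI exI[of _ "\<lambda>b. if b = c then 1 else 0"] conjI)
  assume "finite B" "subfield K" "c \<in> B"
  have "(\<Sum>b\<in>B. (if b = c then 1 else 0) * b) = (\<Sum>b\<in>B. if b = c then b else 0)"
    by (rule sum.cong) auto
  then show "c = (\<Sum>b\<in>B. (if b = c then 1 else 0) * b)"
    using \<open>finite B\<close> \<open>c \<in> B\<close> by simp
  show "\<forall>b\<in>B. (if b = c then 1 else 0) \<in> K" using \<open>subfield K\<close> by (simp add: sf_0 sf_1)
qed

lemma kspan_mono: "K \<subseteq> K' \<Longrightarrow> kspan K B \<subseteq> kspan K' B"
  unfolding kspan_def by blast

lemma kspan_subset: "subfield L \<Longrightarrow> K \<subseteq> L \<Longrightarrow> B \<subseteq> L \<Longrightarrow> kspan K B \<subseteq> L"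
proof
  fix x assume "subfield L" "K \<subseteq> L" "B \<subseteq> L" "x \<in> kspan K B"
  then obtain a where "x = (\<Sum>b\<in>B. a b * b)" "\<forall>b\<in>B. a b \<in> K" unfolding kspan_def by blast
  then show "x \<in> L" using \<open>subfield L\<close> \<open>K \<subseteq> L\<close> \<open>B \<subseteq> L\<close>
    by (auto intro!: sf_sum sf_mult)
qed

lemma dep_coord:
  assumes "finite B" "subfield K"
  shows "finite I \<Longrightarrow> card I > card B \<Longrightarrow> (\<forall>i\<in>I. \<forall>b\<in>B. c i b \<in> K) \<Longrightarrow>
    \<exists>a. (\<forall>i\<in>I. a i \<in> K) \<and> (\<exists>i\<in>I. a i \<noteq> 0) \<and> (\<forall>b\<in>B. (\<Sum>i\<in>I. a i * c i b) = 0)"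
  using assms(1)
proof (induction B arbitrary: I c rule: finite_induct)
  case empty
  then obtain i where "i \<in> I" by fastforce
  then show ?case using assms(2) by (intro exI[of _ "\<lambda>_. 1"]) (auto simp: sf_1)
next
  case (insert b0 B)
  show ?case
  proof (cases "\<forall>i\<in>I. c i b0 = 0")
    case True
    have "card I > card B" using insert by simp
    have "\<forall>i\<in>I. \<forall>b\<in>B. c i b \<in> K" using insert.prems(3) by auto
    from insert.IH[OF insert.prems(1) \<open>card I > card B\<close> this]
    obtain a where "(\<forall>i\<in>I. a i \<in> K)" "(\<exists>i\<in>I. a i \<noteq> 0)" "(\<forall>b\<in>B. (\<Sum>i\<in>I. a i * c i b) = 0)"
      by auto
    then show ?thesis using True by (intro exI[of _ a]) auto
  next
    case False
    then obtain i0 where i0: "i0 \<in> I" "c i0 b0 \<noteq> 0" by auto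
    define r where "r i = c i b0 / c i0 b0" for i
    define c' where "c' i b = c i b - r i * c i0 b" for i b
    have cI': "card (I - {i0}) > card B" using insert i0 by simp
    have "\<forall>i\<in>I - {i0}. \<forall>b\<in>B. c' i b \<in> K"
      using insert.prems(3) i0 assms(2) unfolding c'_def r_def
      by (auto intro!: sf_diff sf_mult sf_divide)
    from insert.IH[OF _ cI' this] insert.prems(1)
    obtain a' where a': "(\<forall>i\<in>I - {i0}. a' i \<in> K)" "(\<exists>i\<in>I - {i0}. a' i \<noteq> 0)"
       "(\<forall>b\<in>B. (\<Sum>i\<in>I - {i0}. a' i * c' i b) = 0)" by auto
    define a where "a i = (if i = i0 then - (\<Sum>j\<in>I - {i0}. a' j * r j) else a' i)" for i
    have key: "(\<Sum>i\<in>I. a i * c i b) = (\<Sum>i\<in>I - {i0}. a' i * c' i b)" for b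
    proof -
      have "(\<Sum>i\<in>I. a i * c i b) = a i0 * c i0 b + (\<Sum>i\<in>I - {i0}. a i * c i b)"
        using i0 insert.prems(1) by (simp add: sum.remove)
      also have "(\<Sum>i\<in>I - {i0}. a i * c i b) = (\<Sum>i\<in>I - {i0}. a' i * c i b)"
        unfolding a_def by simp
      also have "a i0 * c i0 b = - (\<Sum>j\<in>I - {i0}. a' j * r j * c i0 b)"
        unfolding a_def by (simp add: sum_distrib_right)
      finally show ?thesis unfolding c'_def
        by (simp add: algebra_simps sum_subtractf)
    qed
    show ?thesis
    proof (intro exI[of _ a] conjI ballI)
      fix i assume "i \<in> I"
      then show "a i \<in> K" using a'(1) i0 assms(2) insert.prems(3) unfolding a_def r_def
        by (auto intro!: sf_uminus sf_sum sf_mult sf_divide)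
    next
      show "\<exists>i\<in>I. a i \<noteq> 0" using a'(2) unfolding a_def by auto
    next
      fix b assume "b \<in> insert b0 B"
      moreover have "c' i b0 = 0" for i using i0 unfolding c'_def r_def by simp
      ultimately show "(\<Sum>i\<in>I. a i * c i b) = 0" using key a'(3) by auto
    qed
  qed
qed

lemma dep_kspan:
  assumes "finite B" "subfield K" "finite I" "card I > card B" "\<And>i. i \<in> I \<Longrightarrow> y i \<in> kspan K B"
  shows "\<exists>a. (\<forall>i\<in>I. a i \<in> K) \<and> (\<exists>i\<in>I. a i \<noteq> 0) \<and> (\<Sum>i\<in>I. a i * y i) = 0"
proof -
  have "\<forall>i\<in>I. \<exists>c. y i = (\<Sum>b\<in>B. c b * b) \<and> (\<forall>b\<in>B. c b \<in> K)"
    using assms(5) unfolding kspan_def by blast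
  then obtain c where c: "\<And>i. i \<in> I \<Longrightarrow> y i = (\<Sum>b\<in>B. c i b * b) \<and> (\<forall>b\<in>B. c i b \<in> K)"
    by metis
  from dep_coord[OF assms(1,2,3,4), of c] c obtain a where
    a: "(\<forall>i\<in>I. a i \<in> K)" "(\<exists>i\<in>I. a i \<noteq> 0)" "(\<forall>b\<in>B. (\<Sum>i\<in>I. a i * c i b) = 0)" by auto
  have "(\<Sum>i\<in>I. a i * y i) = (\<Sum>i\<in>I. \<Sum>b\<in>B. a i * c i b * b)"
    using c by (simp add: sum_distrib_left mult.assoc)
  also have "\<dots> = (\<Sum>b\<in>B. (\<Sum>i\<in>I. a i * c i b) * b)"
    by (subst sum.swap) (simp add: sum_distrib_right)
  also have "\<dots> = 0" using a(3) by simp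
  finally show ?thesis using a by blast
qed



lemma kspan_mult_base:
  assumes K: "subfield K" and y: "y \<in> kspan K B" and bc: "\<And>b. b \<in> B \<Longrightarrow> b * c \<in> kspan K D"
  shows "y * c \<in> kspan K D"
proof -
  from y obtain a where a: "y = (\<Sum>b\<in>B. a b * b)" "\<forall>b\<in>B. a b \<in> K" unfolding kspan_def by blast
  have "y * c = (\<Sum>b\<in>B. a b * (b * c))" unfolding a(1) by (simp add: sum_distrib_right mult.assoc)
  also have "\<dots> \<in> kspan K D"
  proof (rule kspan_sum[OF K])
    fix b assume "b \<in> B"
    then show "a b * (b * c) \<in> kspan K D" using kspan_scale[OF bc[OF \<open>b \<in> B\<close>] _ K] a(2) by blast
  qed
  finally show ?thesis .
qed

lemma ext_trans:
  assumes "finite_ext K L" "finite_ext L Z" shows "finite_ext K Z"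
proof -
  from assms(1) obtain B where B: "finite B" "B \<subseteq> L" "L \<subseteq> kspan K B" and K: "subfield K" "subfield L" "K \<subseteq> L"
    unfolding finite_ext_kspan by blast
  from assms(2) obtain C where C: "finite C" "C \<subseteq> Z" "Z \<subseteq> kspan L C" and Z: "subfield Z" "L \<subseteq> Z"
    unfolding finite_ext_kspan by blast
  define D where "D = (\<lambda>(b, c). b * c) ` (B \<times> C)"
  have "finite D" unfolding D_def using B C by simp
  moreover have "D \<subseteq> Z" unfolding D_def using B C Z by (auto intro!: sf_mult)
  moreover have "Z \<subseteq> kspan K D"
  proof
    fix x assume "x \<in> Z"
    then obtain a where a: "x = (\<Sum>c\<in>C. a c * c)" "\<forall>c\<in>C. a c \<in> L" using C unfolding kspan_def by blast
    have "a c * c \<in> kspan K D" if "c \<in> C" for c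
    proof (rule kspan_mult_base[OF K(1)])
      show "a c \<in> kspan K B" using a(2) that B by auto
      show "b * c \<in> kspan K D" if "b \<in> B" for b
        using \<open>finite D\<close> K(1) \<open>c \<in> C\<close> \<open>b \<in> B\<close> by (intro kspan_base) (auto simp: D_def)
    qed
    then show "x \<in> kspan K D" unfolding a(1) using K(1) by (intro kspan_sum) auto
  qed
  ultimately show ?thesis unfolding finite_ext_kspan using K Z by blast
qed

lemma ext_down:
  assumes "finite_ext K Z" "subfield N" "K \<subseteq> N" "N \<subseteq> Z" shows "finite_ext N Z"
proof -
  from assms(1) obtain B where B: "finite B" "B \<subseteq> Z" "Z \<subseteq> kspan K B" "subfield Z"
    unfolding finite_ext_kspan by blast
  have "Z \<subseteq> kspan N B" using B(3) kspan_mono[OF assms(3), of B] by (rule order.trans)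
  then show ?thesis unfolding finite_ext_kspan using B assms(2,4) by blast
qed

lemma ext_refl: assumes K: "subfield K" shows "finite_ext K K"
proof -
  have "K \<subseteq> kspan K {1}"
  proof
    fix k assume "k \<in> K"
    then show "k \<in> kspan K {1}" unfolding kspan_def by (intro CollectI exI[of _ "\<lambda>_. k"]) simp
  qed
  then show ?thesis unfolding finite_ext_kspan using K sf_1[OF K] by blast
qed

lemma subfield_Inter: assumes "\<And>Z. Z \<in> A \<Longrightarrow> subfield Z" shows "subfield (\<Inter>A)"
  unfolding subfield_def
proof (intro conjI ballI impI)
  show "0 \<in> \<Inter>A" using assms sf_0 by blast
  show "1 \<in> \<Inter>A" using assms sf_1 by blast
  fix x y assume "x \<in> \<Inter>A" "y \<in> \<Inter>A"
  then show "x + y \<in> \<Inter>A" "x - y \<in> \<Inter>A" "x * y \<in> \<Inter>A"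
    using assms sf_add sf_diff sf_mult by (meson InterD InterI)+
next
  fix x assume "x \<in> \<Inter>A"
  then show "inverse x \<in> \<Inter>A" using assms sf_inv by (meson InterD InterI)
qed

lemma kspan_inverse:
  assumes K: "subfield K" and B: "finite B" and one: "1 \<in> kspan K B"
    and mul: "\<And>x y. x \<in> kspan K B \<Longrightarrow> y \<in> kspan K B \<Longrightarrow> x * y \<in> kspan K B"
    and x: "x \<in> kspan K B" "x \<noteq> 0"
  shows "inverse x \<in> kspan K B"
proof -
  have pw: "x ^ i \<in> kspan K B" for i by (induction i) (auto simp: one mul x)
  obtain a where a: "\<forall>i\<in>{..card B}. a i \<in> K" "\<exists>i\<in>{..card B}. a i \<noteq> 0"
      "(\<Sum>i\<in>{..card B}. a i * x ^ i) = 0"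
    using dep_kspan[OF B K, of "{..card B}" "\<lambda>i. x ^ i"] pw by auto
  define n where "n = card B"
  define k where "k = (LEAST i. a i \<noteq> 0)"
  have ak: "a k \<noteq> 0" unfolding k_def using a(2) LeastI[of "\<lambda>i. a i \<noteq> 0"] by blast
  have lt: "a i = 0" if "i < k" for i using that unfolding k_def using not_less_Least by blast
  have kn: "k \<le> n"
  proof -
    obtain i where "i \<le> card B" "a i \<noteq> 0" using a(2) by auto
    then show ?thesis unfolding k_def n_def using Least_le[of "\<lambda>i. a i \<noteq> 0" i] by linarith
  qed
  have "0 = (\<Sum>i\<in>{..n}. a i * x ^ i)" using a(3) n_def by simp
  also have "\<dots> = (\<Sum>i\<in>{k..n}. a i * x ^ i)"
    by (rule sum.mono_neutral_right) (auto simp: lt)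
  also have "\<dots> = (\<Sum>i\<in>{k..n}. x ^ k * (a i * x ^ (i - k)))"
  proof (rule sum.cong[OF refl])
    fix i assume "i \<in> {k..n}"
    then have "x ^ i = x ^ k * x ^ (i - k)" unfolding power_add[symmetric] by simp
    then show "a i * x ^ i = x ^ k * (a i * x ^ (i - k))" by (simp only: ac_simps)
  qed
  also have "\<dots> = x ^ k * (\<Sum>i\<in>{k..n}. a i * x ^ (i - k))" by (simp add: sum_distrib_left)
  finally have "(\<Sum>i\<in>{k..n}. a i * x ^ (i - k)) = 0" using x(2) by simp
  moreover have "{k..n} = insert k {k<..n}" using kn by auto
  ultimately have "a k + (\<Sum>i\<in>{k<..n}. a i * x ^ (i - k)) = 0" by simp
  moreover have "(\<Sum>i\<in>{k<..n}. a i * x ^ (i - k)) = x * (\<Sum>i\<in>{k<..n}. a i * x ^ (i - k - 1))"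
    unfolding sum_distrib_left
  proof (rule sum.cong[OF refl])
    fix i assume "i \<in> {k<..n}"
    then obtain j where j: "i - k = Suc j" by (metis Suc_diff_Suc greaterThanAtMost_iff)
    then have "i - k - 1 = j" by simp
    then show "a i * x ^ (i - k) = x * (a i * x ^ (i - k - 1))" using j by (simp only: power_Suc ac_simps)
  qed
  ultimately have eq: "x * (\<Sum>i\<in>{k<..n}. a i * x ^ (i - k - 1)) = - a k" by (simp add: add_eq_0_iff)
  define S where "S = (\<Sum>i\<in>{k<..n}. a i * x ^ (i - k - 1))"
  have eq': "x * S = - a k" using eq S_def by simp
  have "(- inverse (a k)) * S = (- inverse (a k)) * S * (x * inverse x)" using x(2) by simp
  also have "\<dots> = (- inverse (a k)) * (x * S) * inverse x" by (simp only: ac_simps)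
  also have "\<dots> = inverse x" using ak unfolding eq' by simp
  finally have inv: "inverse x = (- inverse (a k)) * S" by simp
  have Sin: "S \<in> kspan K B" unfolding S_def
  proof (rule kspan_sum[OF K])
    fix i assume "i \<in> {k<..n}"
    then have "a i \<in> K" using a(1) n_def by auto
    then show "a i * x ^ (i - k - 1) \<in> kspan K B" using kspan_scale[OF pw _ K] by blast
  qed
  have "- inverse (a k) \<in> K" using a(1) kn n_def by (intro sf_uminus[OF K] sf_inv[OF K]) auto
  then show ?thesis unfolding inv using kspan_scale[OF Sin _ K] by blast
qed

definition compf :: "complex set \<Rightarrow> complex set \<Rightarrow> complex set" where
  "compf F K = \<Inter>{Z. subfield Z \<and> K \<subseteq> Z \<and> F \<subseteq> Z}"

lemma compf_sub: "subfield K \<Longrightarrow> F \<subseteq> K \<Longrightarrow> compf F K = K"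
  unfolding compf_def by blast

lemma compf_mono: "K \<subseteq> L \<Longrightarrow> compf F K \<subseteq> compf F L"
  unfolding compf_def by blast

lemma compf_basic: "subfield (compf F K)" "K \<subseteq> compf F K" "F \<subseteq> compf F K"
  unfolding compf_def by (auto intro!: subfield_Inter)

lemma compf_ext:
  assumes F: "number_field F" and K: "subfield K"
  shows "finite_ext K (compf F K)"
proof -
  from F obtain B where B: "finite B" "B \<subseteq> F" "F \<subseteq> kspan \<rat> B" and Fs: "subfield F"
    unfolding number_field_def finite_ext_kspan by blast
  let ?V = "kspan K B"
  have QK: "\<rat> \<subseteq> K" using sf_Rats[OF K] .
  have FV: "F \<subseteq> ?V" using B(3) kspan_mono[OF QK] by blast
  have one: "1 \<in> ?V" using FV sf_1[OF Fs] by blast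
  have mul: "x * y \<in> ?V" if "x \<in> ?V" "y \<in> ?V" for x y
  proof -
    have yb: "y * b \<in> ?V" if "b \<in> B" for b
      using \<open>y \<in> ?V\<close> by (rule kspan_mult_base[OF K]) (use FV B(2) Fs that in \<open>auto intro: sf_mult\<close>)
    have "y * x \<in> ?V"
    proof -
      from \<open>x \<in> ?V\<close> obtain a where a: "x = (\<Sum>b\<in>B. a b * b)" "\<forall>b\<in>B. a b \<in> K" unfolding kspan_def by blast
      have "y * x = (\<Sum>b\<in>B. a b * (y * b))" unfolding a(1) by (simp add: sum_distrib_left algebra_simps)
      also have "\<dots> \<in> ?V"
      proof (rule kspan_sum[OF K])
        fix b assume "b \<in> B"
        then show "a b * (y * b) \<in> ?V" using kspan_scale[OF yb[OF \<open>b \<in> B\<close>] _ K] a(2) by blast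
      qed
      finally show ?thesis .
    qed
    then show ?thesis by (simp add: mult.commute)
  qed
  have sfV: "subfield ?V"
    unfolding subfield_def
  proof (intro conjI ballI impI)
    show "0 \<in> ?V" using kspan_0[OF K] .
    show "1 \<in> ?V" using one .
    fix x y assume xy: "x \<in> ?V" "y \<in> ?V"
    show "x + y \<in> ?V" using kspan_add[OF xy K] .
    have "(-1) * y \<in> ?V" using kspan_scale[OF xy(2) _ K] sf_uminus[OF K sf_1[OF K]] by blast
    then show "x - y \<in> ?V" using kspan_add[OF xy(1) _ K, of "(-1) * y"] by simp
    show "x * y \<in> ?V" using mul[OF xy] .
  next
    fix x assume "x \<in> ?V" "x \<noteq> 0"
    then show "inverse x \<in> ?V" using kspan_inverse[OF K B(1) one mul] by blast
  qed
  have KV: "K \<subseteq> ?V"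
  proof
    fix k assume "k \<in> K"
    then show "k \<in> ?V" using kspan_scale[OF one _ K, of k] by simp
  qed
  have "compf F K \<subseteq> ?V" unfolding compf_def using sfV KV FV by blast
  moreover have "B \<subseteq> compf F K" using B(2) compf_basic(3) by blast
  ultimately show ?thesis unfolding finite_ext_kspan using K compf_basic(1,2) B(1) by blast
qed

lemma nf_subfield: "number_field K \<Longrightarrow> subfield K"
  unfolding number_field_def finite_ext_def by blast

lemma nf_comp:
  assumes F: "number_field F" and K: "number_field K"
  shows "number_field (compf F K)" "finite_ext F (compf F K)" "finite_ext K (compf F K)"
proof -
  show e: "finite_ext K (compf F K)" using compf_ext[OF F nf_subfield[OF K]] .
  show n: "number_field (compf F K)" using ext_trans[OF K[unfolded number_field_def] e] unfolding number_field_def .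
  show "finite_ext F (compf F K)"
    using ext_down[OF n[unfolded number_field_def] nf_subfield[OF F] sf_Rats[OF nf_subfield[OF F]] compf_basic(3)] .
qed

lemma nf_ext: "number_field K \<Longrightarrow> finite_ext K L \<Longrightarrow> number_field L"
  unfolding number_field_def using ext_trans by blast

lemma compf_ext_mono:
  assumes F: "number_field F" and K: "number_field K" and L: "finite_ext K L"
  shows "finite_ext (compf F K) (compf F L)"
proof -
  have NL: "number_field L" using nf_ext[OF K L] .
  have "K \<subseteq> L" using L unfolding finite_ext_def by blast
  then have sub: "compf F K \<subseteq> compf F L" by (rule compf_mono)
  show ?thesis
    using ext_down[OF nf_comp(1)[OF F NL, unfolded number_field_def] compf_basic(1)
        sf_Rats[OF compf_basic(1)] sub] .
qed



definition rst :: "complex set \<Rightarrow> (complex \<Rightarrow> real) \<Rightarrow> (complex \<Rightarrow> real)" where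
  "rst K g = (\<lambda>x. if x \<in> K then g x else 0)"

lemma av_out: "abs_val K f \<Longrightarrow> x \<notin> K \<Longrightarrow> f x = 0" unfolding abs_val_def by blast
lemma av_nonneg: "abs_val K f \<Longrightarrow> f x \<ge> 0" unfolding abs_val_def by (cases "x \<in> K") auto
lemma av_zero: "abs_val K f \<Longrightarrow> f 0 = 0" unfolding abs_val_def by (cases "0 \<in> K") auto
lemma av_pos: "abs_val K f \<Longrightarrow> x \<in> K \<Longrightarrow> x \<noteq> 0 \<Longrightarrow> f x > 0"
  unfolding abs_val_def by (metis less_eq_real_def)
lemma av_mult: "abs_val K f \<Longrightarrow> x \<in> K \<Longrightarrow> y \<in> K \<Longrightarrow> f (x * y) = f x * f y"
  unfolding abs_val_def by blast
lemma av_tri: "abs_val K f \<Longrightarrow> x \<in> K \<Longrightarrow> y \<in> K \<Longrightarrow> f (x + y) \<le> f x + f y"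
  unfolding abs_val_def by blast
lemma av_nontriv: "abs_val K f \<Longrightarrow> \<exists>x\<in>K. x \<noteq> 0 \<and> f x \<noteq> 1"
  unfolding abs_val_def by blast

lemma av_one: assumes "abs_val K f" "subfield K" shows "f 1 = 1"
proof -
  have "f 1 = f 1 * f 1" using av_mult[OF assms(1), of 1 1] sf_1[OF assms(2)] by simp
  moreover have "f 1 > 0" using av_pos[OF assms(1) sf_1[OF assms(2)]] by simp
  ultimately show ?thesis by simp
qed

lemma av_minus1: assumes "abs_val K f" "subfield K" shows "f (-1) = 1"
proof -
  have m: "-1 \<in> K" using sf_uminus[OF assms(2) sf_1[OF assms(2)]] .
  have "f (-1) * f (-1) = 1" using av_mult[OF assms(1) m m] av_one[OF assms] by simp
  moreover have "f (-1) \<ge> 0" using av_nonneg[OF assms(1)] .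
  moreover have "(f (-1) - 1) * (f (-1) + 1) = f (-1) * f (-1) - 1" by algebra
  ultimately have "(f (-1) - 1) * (f (-1) + 1) = 0" by simp
  with \<open>f (-1) \<ge> 0\<close> show ?thesis by simp
qed

lemma av_uminus: assumes "abs_val K f" "subfield K" "x \<in> K" shows "f (- x) = f x"
proof -
  have "f (-x) = f ((-1) * x)" by simp
  also have "\<dots> = f x" using av_mult[OF assms(1) sf_uminus[OF assms(2) sf_1[OF assms(2)]] assms(3)]
    av_minus1[OF assms(1,2)] by simp
  finally show ?thesis .
qed

lemma av_power: assumes "abs_val K f" "subfield K" "x \<in> K" shows "f (x ^ n) = f x ^ n"
  by (induction n) (auto simp: av_one[OF assms(1,2)] av_mult[OF assms(1) assms(3) sf_power[OF assms(2,3)]])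

lemma av_inverse: assumes "abs_val K f" "subfield K" "x \<in> K" shows "f (inverse x) = inverse (f x)"
proof (cases "x = 0")
  case True then show ?thesis using av_zero[OF assms(1)] by simp
next
  case False
  have "f x * f (inverse x) = 1"
    using av_mult[OF assms(1) assms(3) sf_inv[OF assms(2,3)]] False av_one[OF assms(1,2)] by simp
  from inverse_unique[OF this] show ?thesis by simp
qed

lemma av_divide: assumes "abs_val K f" "subfield K" "x \<in> K" "y \<in> K" shows "f (x / y) = f x / f y"
  using av_mult[OF assms(1,3) sf_inv[OF assms(2,4)]] av_inverse[OF assms(1,2,4)]
  by (simp add: divide_inverse)

lemma av_sum: assumes "abs_val K f" "subfield K" shows "(\<And>i. i \<in> I \<Longrightarrow> h i \<in> K) \<Longrightarrow> f (sum h I) \<le> (\<Sum>i\<in>I. f (h i))"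
proof (induction I rule: infinite_finite_induct)
  case (infinite A) then show ?case using av_zero[OF assms(1)] by simp
next
  case empty then show ?case using av_zero[OF assms(1)] by simp
next
  case (insert i I)
  have "f (sum h (insert i I)) = f (h i + sum h I)" using insert by simp
  also have "\<dots> \<le> f (h i) + f (sum h I)"
    using av_tri[OF assms(1)] insert.prems sf_sum[OF assms(2), of I h] by simp
  also have "\<dots> \<le> f (h i) + (\<Sum>i\<in>I. f (h i))" using insert by simp
  finally show ?case using insert by simp
qed

lemma av_rev: assumes "abs_val K f" "subfield K" "x \<in> K" "y \<in> K" shows "f x - f y \<le> f (x + y)"
proof -
  have "f x = f ((x + y) + (- y))" by simp
  also have "\<dots> \<le> f (x + y) + f (- y)"
    using av_tri[OF assms(1)] sf_add[OF assms(2,3,4)] sf_uminus[OF assms(2,4)] by blast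
  finally show ?thesis using av_uminus[OF assms(1,2,4)] by simp
qed

lemma powr_ne1: "(a::real) > 0 \<Longrightarrow> a \<noteq> 1 \<Longrightarrow> t > 0 \<Longrightarrow> a powr t \<noteq> 1" by simp

lemma place_self: "abs_val K f \<Longrightarrow> f \<in> place_of K f"
  unfolding place_of_def by (auto intro!: exI[of _ 1] simp: powr_one av_nonneg)

lemma place_trans: assumes "g \<in> place_of K f" shows "place_of K g = place_of K f"
proof -
  from assms obtain t where t: "t > 0" "\<forall>x\<in>K. g x = f x powr t" "abs_val K g" unfolding place_of_def by blast
  show ?thesis
  proof (intro set_eqI iffI)
    fix h assume "h \<in> place_of K g"
    then obtain s where "s > 0" "\<forall>x\<in>K. h x = g x powr s" "abs_val K h" unfolding place_of_def by blast
    then show "h \<in> place_of K f" unfolding place_of_def using t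
      by (auto intro!: exI[of _ "t * s"] simp: powr_powr)
  next
    fix h assume "h \<in> place_of K f"
    then obtain s where "s > 0" "\<forall>x\<in>K. h x = f x powr s" "abs_val K h" unfolding place_of_def by blast
    then show "h \<in> place_of K g" unfolding place_of_def using t
      by (auto intro!: exI[of _ "s / t"] simp: powr_powr)
  qed
qed

lemma place_rep: "w \<in> places K \<Longrightarrow> g \<in> w \<Longrightarrow> w = place_of K g"
  unfolding places_def using place_trans by auto

lemma place_av: "g \<in> place_of K f \<Longrightarrow> abs_val K g" unfolding place_of_def by blast
lemma places_av: "w \<in> places K \<Longrightarrow> g \<in> w \<Longrightarrow> abs_val K g"
  unfolding places_def place_of_def by blast
lemma places_ne: "w \<in> places K \<Longrightarrow> \<exists>g. g \<in> w"
  unfolding places_def using place_self by blast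
lemma places_I: "abs_val K g \<Longrightarrow> place_of K g \<in> places K"
  unfolding places_def by blast

lemma place_pow: assumes "w \<in> places K" "g \<in> w" "h \<in> w" shows "\<exists>t>0. \<forall>x\<in>K. h x = g x powr t"
  using assms place_rep[OF assms(1,2)] unfolding place_of_def by blast

lemma rst_av:
  assumes "abs_val N g" "subfield K" "K \<subseteq> N" "\<exists>x\<in>K. x \<noteq> 0 \<and> g x \<noteq> 1"
  shows "abs_val K (rst K g)"
  using assms unfolding abs_val_def rst_def subfield_def by (auto simp: subset_iff)

lemma rst_id: "abs_val K g \<Longrightarrow> rst K g = g"
  unfolding rst_def using av_out by fastforce

lemma rst_rst: "K \<subseteq> Z \<Longrightarrow> rst K (rst Z g) = rst K g"
  unfolding rst_def by (rule ext) auto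

lemma D_rep:
  assumes x: "x \<in> places N" and v: "v \<in> places K" and d: "place_divides K x v" and g: "g \<in> x"
    and K: "subfield K" "K \<subseteq> N"
  shows "rst K g \<in> v"
proof -
  from d obtain g0 where g0: "g0 \<in> x" "rst K g0 \<in> v" unfolding place_divides_def rst_def by blast
  obtain t where t: "t > 0" "\<forall>y\<in>N. g y = g0 y powr t" using place_pow[OF x g0(1) g] by blast
  have a0: "abs_val K (rst K g0)" using places_av[OF v g0(2)] .
  have aN: "abs_val N g" using places_av[OF x g] .
  have aN0: "abs_val N g0" using places_av[OF x g0(1)] .
  obtain y where y: "y \<in> K" "y \<noteq> 0" "rst K g0 y \<noteq> 1" using av_nontriv[OF a0] by blast
  have "g y \<noteq> 1" using t y av_pos[OF aN0, of y] K(2) unfolding rst_def by auto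
  then have aK: "abs_val K (rst K g)" using rst_av[OF aN K(1,2)] y by blast
  have "rst K g \<in> place_of K (rst K g0)"
    unfolding place_of_def using aK t K(2) by (auto simp: rst_def intro!: exI[of _ t])
  then show ?thesis using place_rep[OF v g0(2)] by simp
qed

lemma D_uniq:
  assumes "x \<in> places N" "y \<in> places Z" "y' \<in> places Z" "place_divides Z x y" "place_divides Z x y'"
    "subfield Z" "Z \<subseteq> N"
  shows "y = y'"
proof -
  obtain g where g: "g \<in> x" using places_ne[OF assms(1)] by blast
  have "rst Z g \<in> y" "rst Z g \<in> y'" using D_rep[OF assms(1) _ _ g assms(6,7)] assms(2-5) by auto
  then show ?thesis using place_rep assms(2,3) by metis
qed

lemma D_self: assumes "w \<in> places K" shows "place_divides K w w"
proof -
  obtain g where g: "g \<in> w" using places_ne[OF assms] by blast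
  have "rst K g = g" using rst_id[OF places_av[OF assms g]] .
  then show ?thesis unfolding place_divides_def rst_def[symmetric] using g by (intro bexI[of _ g]) auto
qed

lemma D_same: assumes "w \<in> places K" "v \<in> places K" "place_divides K w v" "subfield K"
  shows "w = v"
  using D_uniq[OF assms(1) assms(1) assms(2) D_self[OF assms(1)] assms(3) assms(4)] by simp

lemma D_trans:
  assumes x: "x \<in> places N" and y: "y \<in> places Z" and v: "v \<in> places K"
    and dxy: "place_divides Z x y" and dyv: "place_divides K y v"
    and sf: "subfield K" "subfield Z" "K \<subseteq> Z" "Z \<subseteq> N"
  shows "place_divides K x v"
proof -
  obtain g where g: "g \<in> x" using places_ne[OF x] by blast
  have "rst Z g \<in> y" using D_rep[OF x y dxy g sf(2,4)] .
  from D_rep[OF y v dyv this sf(1,3)] have "rst K g \<in> v" using rst_rst[OF sf(3)] by simp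
  then show ?thesis unfolding place_divides_def using g by (auto simp: rst_def[symmetric])
qed

lemma D_below:
  assumes y: "y \<in> places N" and v: "v \<in> places K" and d: "place_divides K y v"
    and sf: "subfield K" "subfield E" "K \<subseteq> E" "E \<subseteq> N"
  shows "\<exists>u\<in>places E. place_divides E y u \<and> place_divides K u v"
proof -
  obtain g where g: "g \<in> y" using places_ne[OF y] by blast
  have gv: "rst K g \<in> v" using D_rep[OF y v d g sf(1)] sf by blast
  have aN: "abs_val N g" using places_av[OF y g] .
  obtain z where z: "z \<in> K" "z \<noteq> 0" "rst K g z \<noteq> 1" using av_nontriv[OF places_av[OF v gv]] by blast
  have aE: "abs_val E (rst E g)" using rst_av[OF aN sf(2,4)] z sf(3) unfolding rst_def by auto
  let ?u = "place_of E (rst E g)"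
  have u: "?u \<in> places E" using places_I[OF aE] .
  have "rst E g \<in> ?u" using place_self[OF aE] .
  moreover have "rst K (rst E g) \<in> v" using gv rst_rst[OF sf(3)] by simp
  ultimately have "place_divides K ?u v" unfolding place_divides_def by (auto simp: rst_def[symmetric])
  moreover have "place_divides E y ?u" unfolding place_divides_def using g \<open>rst E g \<in> ?u\<close>
    by (auto simp: rst_def[symmetric])
  ultimately show ?thesis using u by blast
qed



definition eel :: "complex \<Rightarrow> complex \<Rightarrow> nat \<Rightarrow> int \<Rightarrow> complex" where
  "eel x y n m = x ^ n * (if m \<ge> 0 then inverse y ^ nat m else y ^ nat (- m))"

lemma eel_in: "subfield L \<Longrightarrow> x \<in> L \<Longrightarrow> y \<in> L \<Longrightarrow> eel x y n m \<in> L"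
  unfolding eel_def by (auto intro!: sf_mult sf_power sf_inv)

lemma eel_nz: "x \<noteq> 0 \<Longrightarrow> y \<noteq> 0 \<Longrightarrow> eel x y n m \<noteq> 0"
  unfolding eel_def by auto

lemma ln_eel:
  assumes f: "abs_val L f" and L: "subfield L" and x: "x \<in> L" "x \<noteq> 0" and y: "y \<in> L" "y \<noteq> 0"
  shows "ln (f (eel x y n m)) = real n * ln (f x) - of_int m * ln (f y)"
proof -
  have fx: "f x > 0" using av_pos[OF f x] .
  have fy: "f y > 0" using av_pos[OF f y] .
  show ?thesis
  proof (cases "m \<ge> 0")
    case True
    have "f (eel x y n m) = f x ^ n * inverse (f y) ^ nat m"
      unfolding eel_def using True
      by (simp add: av_mult[OF f sf_power[OF L x(1)] sf_power[OF L sf_inv[OF L y(1)]]]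
          av_power[OF f L] x y sf_inv[OF L] av_inverse[OF f L])
    then have "ln (f (eel x y n m)) = real n * ln (f x) + real (nat m) * ln (inverse (f y))"
      using fx fy by (simp add: ln_mult ln_realpow)
    then show ?thesis using True by (simp add: ln_inverse)
  next
    case False
    have "f (eel x y n m) = f x ^ n * f y ^ nat (- m)"
      unfolding eel_def using False
      by (simp add: av_mult[OF f sf_power[OF L x(1)] sf_power[OF L y(1)]] av_power[OF f L] x y)
    then have "ln (f (eel x y n m)) = real n * ln (f x) + real (nat (- m)) * ln (f y)"
      using fx fy by (simp add: ln_mult ln_realpow)
    then show ?thesis using False by simp
  qed
qed

lemma exists_big:
  assumes f: "abs_val L f" and L: "subfield L" shows "\<exists>y\<in>L. f y > 1"
proof -
  obtain x where x: "x \<in> L" "x \<noteq> 0" "f x \<noteq> 1" using av_nontriv[OF f] by blast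
  have fx: "f x > 0" using av_pos[OF f x(1,2)] .
  show ?thesis
  proof (cases "f x > 1")
    case True then show ?thesis using x by blast
  next
    case False
    then have "f x < 1" using x by simp
    then have "f (inverse x) > 1" using av_inverse[OF f L x(1)] fx by (simp add: one_less_inverse)
    then show ?thesis using sf_inv[OF L x(1)] by blast
  qed
qed

lemma lemmaA:
  assumes g: "abs_val L g" and h: "abs_val L h" and L: "subfield L"
    and imp: "\<And>x. x \<in> L \<Longrightarrow> g x < 1 \<Longrightarrow> h x < 1"
  shows "h \<in> place_of L g"
proof -
  obtain y where y: "y \<in> L" "g y > 1" using exists_big[OF g L] by blast
  have y0: "y \<noteq> 0" using y av_zero[OF g] by auto
  have gy: "g (inverse y) < 1" using av_inverse[OF g L y(1)] y by (simp add: inverse_less_1_iff)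
  have "h (inverse y) < 1" using imp[OF sf_inv[OF L y(1)] gy] .
  then have hy: "h y > 1" using av_inverse[OF h L y(1)] av_pos[OF h y(1) y0]
    by (simp add: inverse_less_1_iff)
  define b where "b = ln (g y)"
  define d where "d = ln (h y)"
  have b: "b > 0" unfolding b_def using y by simp
  have d: "d > 0" unfolding d_def using hy by simp
  define t where "t = d / b"
  have t: "t > 0" unfolding t_def using b d by simp
  have main: "h x = g x powr t" if x: "x \<in> L" for x
  proof (cases "x = 0")
    case True then show ?thesis using av_zero[OF g] av_zero[OF h] by simp
  next
    case False
    define a where "a = ln (g x)"
    define c where "c = ln (h x)"
    have F: "real n * c < of_int m * d" if "real n * a < of_int m * b" for n m
    proof -
      have "ln (g (eel x y n m)) < 0" using ln_eel[OF g L x False y(1) y0] that a_def b_def by simp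
      then have "g (eel x y n m) < 1"
        using av_pos[OF g eel_in[OF L x y(1)] eel_nz[OF False y0]] by simp
      then have "h (eel x y n m) < 1" using imp eel_in[OF L x y(1)] by blast
      then have "ln (h (eel x y n m)) < 0"
        using av_pos[OF h eel_in[OF L x y(1)] eel_nz[OF False y0]] by simp
      then show ?thesis using ln_eel[OF h L x False y(1) y0] c_def d_def by simp
    qed
    have F': "of_int m * d < real n * c" if "of_int m * b < real n * a" for n m
    proof -
      have ix: "inverse x \<in> L" "inverse x \<noteq> 0" using sf_inv[OF L x] False by auto
      have "ln (g (eel (inverse x) y n (- m))) < 0"
        using ln_eel[OF g L ix y(1) y0] that a_def b_def av_inverse[OF g L x] av_pos[OF g x False]
        by (simp add: ln_inverse)
      then have "g (eel (inverse x) y n (- m)) < 1"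
        using av_pos[OF g eel_in[OF L ix(1) y(1)] eel_nz[OF ix(2) y0]] by simp
      then have "h (eel (inverse x) y n (- m)) < 1" using imp eel_in[OF L ix(1) y(1)] by blast
      then have "ln (h (eel (inverse x) y n (- m))) < 0"
        using av_pos[OF h eel_in[OF L ix(1) y(1)] eel_nz[OF ix(2) y0]] by simp
      then show ?thesis using ln_eel[OF h L ix y(1) y0] c_def d_def av_inverse[OF h L x] av_pos[OF h x False]
        by (simp add: ln_inverse)
    qed
    have eq: "c / d = a / b"
    proof (rule ccontr)
      assume ne: "c / d \<noteq> a / b"
      show False
      proof (cases "c / d > a / b")
        case True
        obtain q where q: "q \<in> \<rat>" "a / b < q" "q < c / d" using Rats_dense_in_real[OF True] by blast
        obtain p r where pr: "r > 0" "q = of_int p / of_int r" using Rats_cases'[OF q(1)] by metis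
        define n where "n = nat r"
        have n: "real n = of_int r" "n > 0" unfolding n_def using pr by auto
        have "a < q * b" using q(2) b by (simp add: divide_less_eq)
        then have "real n * a < of_int p * b" using pr n by (simp add: field_simps)
        then have "real n * c < of_int p * d" by (rule F)
        then have "c * of_int r < (d * q) * of_int r" using pr n d by (simp add: field_simps)
        then have "c < d * q" using pr(1) by (simp add: mult_less_cancel_right)
        then have "c / d < q" using d by (simp add: divide_less_eq mult.commute)
        then show False using q by simp
      next
        case False
        then have lt: "c / d < a / b" using ne by simp
        obtain q where q: "q \<in> \<rat>" "c / d < q" "q < a / b" using Rats_dense_in_real[OF lt] by blast
        obtain p r where pr: "r > 0" "q = of_int p / of_int r" using Rats_cases'[OF q(1)] by metis
        define n where "n = nat r"
        have n: "real n = of_int r" "n > 0" unfolding n_def using pr by auto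
        have "q * b < a" using q(3) b by (simp add: less_divide_eq)
        then have "of_int p * b < real n * a" using pr n by (simp add: field_simps)
        then have "of_int p * d < real n * c" by (rule F')
        then have "(d * q) * of_int r < c * of_int r" using pr n d by (simp add: field_simps)
        then have "d * q < c" using pr(1) by (simp add: mult_less_cancel_right)
        then have "q < c / d" using d by (simp add: less_divide_eq mult.commute)
        then show False using q by simp
      qed
    qed
    then have "c = t * a" unfolding t_def using b d by (simp add: field_simps)
    then have "h x = exp (t * ln (g x))" unfolding c_def a_def using av_pos[OF h x False] by (metis exp_ln)
    then show ?thesis unfolding powr_def using av_pos[OF g x False] by simp
  qed
  show ?thesis unfolding place_of_def using h t main by blast
qed

lemma lemmaB:
  assumes g: "abs_val L g" and h: "abs_val L h" and L: "subfield L" and ne: "h \<notin> place_of L g"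
  shows "\<exists>z\<in>L. g z > 1 \<and> h z < 1"
proof -
  obtain x where x: "x \<in> L" "g x < 1" "h x \<ge> 1" using lemmaA[OF g h L] ne by force
  have ne2: "g \<notin> place_of L h"
  proof
    assume "g \<in> place_of L h"
    then have "place_of L g = place_of L h" by (rule place_trans)
    then show False using ne place_self[OF h] by simp
  qed
  obtain y where y: "y \<in> L" "h y < 1" "g y \<ge> 1" using lemmaA[OF h g L] ne2 by force
  have x0: "x \<noteq> 0" using x(3) av_zero[OF h] by auto
  have gx: "g x > 0" using av_pos[OF g x(1) x0] .
  have hx: "h x > 0" using av_pos[OF h x(1) x0] .
  have "g (y / x) = g y / g x" using av_divide[OF g L y(1) x(1)] .
  then have "g (y / x) > 1" using x y gx by (simp add: less_divide_eq)
  moreover have "h (y / x) = h y / h x" using av_divide[OF h L y(1) x(1)] .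
  then have "h (y / x) < 1" using x y hx by (simp add: divide_less_eq)
  ultimately show ?thesis using sf_divide[OF L y(1) x(1)] by blast
qed



lemma ev_big: assumes "(a::real) > 1" shows "eventually (\<lambda>r. C < a ^ r) sequentially"
proof -
  obtain N where N: "C < a ^ N" using real_arch_pow[OF assms] by blast
  have "\<forall>r\<ge>N. C < a ^ r"
  proof (intro allI impI)
    fix r assume "N \<le> r"
    then have "a ^ N \<le> a ^ r" using assms by (intro power_increasing) auto
    then show "C < a ^ r" using N by simp
  qed
  then show ?thesis unfolding eventually_sequentially by blast
qed

lemma ev_small: assumes "0 \<le> (a::real)" "a < 1" "e > 0" shows "eventually (\<lambda>r. a ^ r < e) sequentially"
proof -
  have "(\<lambda>r. a ^ r) \<longlonglongrightarrow> 0" using assms by (intro LIMSEQ_power_zero) simp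
  from order_tendstoD(2)[OF this assms(3)] show ?thesis .
qed

lemma ev_get: "eventually P sequentially \<Longrightarrow> \<exists>r. P r"
  unfolding eventually_sequentially by blast

lemma stepC:
  assumes L: "subfield L" and g0: "abs_val L g0" and h: "abs_val L h" and fin: "finite J"
    and G: "\<And>i. i \<in> J \<Longrightarrow> abs_val L (G i)"
    and z: "z \<in> L" "g0 z > 1" "\<And>i. i \<in> J \<Longrightarrow> G i z < 1"
    and y: "y \<in> L" "g0 y > 1" "h y < 1"
  shows "\<exists>u\<in>L. g0 u > 1 \<and> h u < 1 \<and> (\<forall>i\<in>J. G i u < 1)"
proof -
  have z0: "z \<noteq> 0" using z(2) av_zero[OF g0] by auto
  have y0: "y \<noteq> 0" using y(2) av_zero[OF g0] by auto
  have Gz: "G i z > 0" if "i \<in> J" for i using av_pos[OF G[OF that] z(1) z0] .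
  have Gy: "G i y > 0" if "i \<in> J" for i using av_pos[OF G[OF that] y(1) y0] .
  have hz: "h z > 0" using av_pos[OF h z(1) z0] .
  have hy: "h y > 0" using av_pos[OF h y(1) y0] .
  have zr: "z ^ r \<in> L" for r using sf_power[OF L z(1)] .
  consider "h z < 1" | "h z = 1" | "h z > 1" by linarith
  then show ?thesis
  proof cases
    case 1 then show ?thesis using z by blast
  next
    case 2
    have "eventually (\<lambda>r. \<forall>i\<in>J. G i z ^ r < 1 / G i y) sequentially"
      using fin by (intro eventually_ball_finite ballI ev_small) (auto simp: Gz Gy less_imp_le z(3))
    then obtain r where r: "\<forall>i\<in>J. G i z ^ r < 1 / G i y" using ev_get by blast
    let ?u = "z ^ r * y"
    have u: "?u \<in> L" using sf_mult[OF L zr y(1)] .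
    have "g0 ?u = g0 z ^ r * g0 y" using av_mult[OF g0 zr y(1)] av_power[OF g0 L z(1)] by simp
    moreover have "g0 z ^ r \<ge> 1" using z(2) by simp
    ultimately have "g0 ?u > 1" using y(2) by (metis less_1_mult linorder_not_less mult.commute mult_le_cancel_left1 order_le_less_trans zero_less_one order.strict_trans)
    moreover have "h ?u < 1" using av_mult[OF h zr y(1)] av_power[OF h L z(1)] 2 y(3) by simp
    moreover have "G i ?u < 1" if "i \<in> J" for i
    proof -
      have "G i ?u = G i z ^ r * G i y" using av_mult[OF G[OF that] zr y(1)] av_power[OF G[OF that] L z(1)] by simp
      also have "\<dots> < 1" using r that Gy[OF that] by (simp add: less_divide_eq)
      finally show ?thesis .
    qed
    ultimately show ?thesis using u by blast
  next
    case 3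
    have e1: "eventually (\<lambda>r. 1 / (g0 y - 1) < g0 z ^ r) sequentially" using ev_big[OF z(2)] .
    have e2: "eventually (\<lambda>r. 1 / (1 - h y) < h z ^ r) sequentially" using ev_big[OF 3] .
    have e3: "eventually (\<lambda>r. \<forall>i\<in>J. G i z ^ r < 1 / (G i y + 1)) sequentially"
      using fin by (intro eventually_ball_finite ballI ev_small) (auto simp: Gz Gy less_imp_le z(3) add_pos_pos)
    have e4: "eventually (\<lambda>r. 1 < g0 z ^ r) sequentially" using ev_big[OF z(2)] .
    obtain r where r1: "1 / (g0 y - 1) < g0 z ^ r" and r2: "1 / (1 - h y) < h z ^ r"
      and r3: "\<forall>i\<in>J. G i z ^ r < 1 / (G i y + 1)" and r4: "1 < g0 z ^ r"
      using ev_get[OF eventually_conj[OF e1 eventually_conj[OF e2 eventually_conj[OF e3 e4]]]] by blast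
    define D where "D = 1 + z ^ r"
    have D: "D \<in> L" unfolding D_def using sf_add[OF L sf_1[OF L] zr] .
    have up: "f D \<le> 1 + f z ^ r" if f: "abs_val L f" for f
      using av_tri[OF f sf_1[OF L] zr] av_one[OF f L] av_power[OF f L z(1)] unfolding D_def by simp
    have lo1: "f z ^ r - 1 \<le> f D" if f: "abs_val L f" for f
      using av_rev[OF f L zr sf_1[OF L]] av_one[OF f L] av_power[OF f L z(1)] unfolding D_def
      by (simp add: add.commute)
    have lo2: "1 - f z ^ r \<le> f D" if f: "abs_val L f" for f
      using av_rev[OF f L sf_1[OF L] zr] av_one[OF f L] av_power[OF f L z(1)] unfolding D_def
      by simp
    have uval: "f (z ^ r * y / D) = f z ^ r * f y / f D" if f: "abs_val L f" for f
      using av_divide[OF f L sf_mult[OF L zr y(1)] D] av_mult[OF f zr y(1)] av_power[OF f L z(1)] by simp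
    let ?u = "z ^ r * y / D"
    have u: "?u \<in> L" using sf_divide[OF L sf_mult[OF L zr y(1)] D] .
    have "g0 ?u > 1"
    proof -
      have A: "g0 z ^ r * (g0 y - 1) > 1" using r1 y(2) by (simp add: divide_less_eq mult.commute)
      have "g0 D > 0" using lo1[OF g0] r4 by simp
      moreover have "g0 D < g0 z ^ r * g0 y" using up[OF g0] A by (simp add: algebra_simps)
      ultimately show ?thesis unfolding uval[OF g0] by (simp add: less_divide_eq)
    qed
    moreover have "h ?u < 1"
    proof -
      have A: "h z ^ r * (1 - h y) > 1" using r2 y(3) by (simp add: divide_less_eq mult.commute)
      have hzy: "h z ^ r * h y \<ge> 0" using hy hz by simp
      have "h D > 0" using lo1[OF h] A hzy by (simp add: algebra_simps)
      moreover have "h z ^ r * h y < h D" using lo1[OF h] A by (simp add: algebra_simps)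
      ultimately show ?thesis unfolding uval[OF h] by (simp add: divide_less_eq)
    qed
    moreover have "G i ?u < 1" if i: "i \<in> J" for i
    proof -
      have A: "G i z ^ r * (G i y + 1) < 1" using r3 i Gy[OF i] by (simp add: less_divide_eq add_pos_pos)
      have nn: "G i z ^ r * G i y \<ge> 0" using Gy[OF i] Gz[OF i] by simp
      have "G i D > 0" using lo2[OF G[OF i]] A nn by (simp add: algebra_simps)
      moreover have "G i z ^ r * G i y < G i D" using lo2[OF G[OF i]] A by (simp add: algebra_simps)
      ultimately show ?thesis unfolding uval[OF G[OF i]] by (simp add: divide_less_eq)
    qed
    ultimately show ?thesis using u by blast
  qed
qed

lemma lemmaC:
  assumes L: "subfield L" and g0: "abs_val L g0" and fin: "finite J"
    and G: "\<And>i. i \<in> J \<Longrightarrow> abs_val L (G i)" and ne: "\<And>i. i \<in> J \<Longrightarrow> G i \<notin> place_of L g0"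
  shows "\<exists>z\<in>L. g0 z > 1 \<and> (\<forall>i\<in>J. G i z < 1)"
  using fin G ne
proof (induction J rule: finite_induct)
  case empty then show ?case using exists_big[OF g0 L] by blast
next
  case (insert j J)
  then obtain z where z: "z \<in> L" "g0 z > 1" "\<forall>i\<in>J. G i z < 1" by auto
  obtain y where y: "y \<in> L" "g0 y > 1" "G j y < 1" using lemmaB[OF g0 insert.prems(1)[of j] L] insert.prems(2)[of j] by auto
  from stepC[OF L g0 insert.prems(1)[of j] insert.hyps(1) _ z(1,2) _ y] insert.prems(1) z(3)
  show ?case by auto
qed



lemma card_above:
  assumes B: "finite B" "B \<subseteq> L" "L \<subseteq> kspan K B" and sf: "subfield K" "subfield L" "K \<subseteq> L"
    and v: "v \<in> places K"
    and W: "W \<subseteq> {w \<in> places L. place_divides K w v}" "finite W"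
  shows "card W \<le> card B"
  proof (rule ccontr)
    assume "\<not> card W \<le> card B"
    then have big: "card W > card B" by simp
    obtain f0 where f0: "f0 \<in> v" using places_ne[OF v] by blast
    have af0: "abs_val K f0" using places_av[OF v f0] .
    define g :: "(complex \<Rightarrow> real) set \<Rightarrow> (complex \<Rightarrow> real)" where "g w = (SOME h. h \<in> w)" for w
    have gw: "g w \<in> w" if "w \<in> W" for w
      unfolding g_def using places_ne W that by (metis (mono_tags, lifting) mem_Collect_eq someI subsetD)
    have wpl: "w \<in> places L" if "w \<in> W" for w using W that by auto
    have ag: "abs_val L (g w)" if "w \<in> W" for w using places_av[OF wpl[OF that] gw[OF that]] .
    have gK: "\<exists>t>0. \<forall>x\<in>K. g w x = f0 x powr t" if "w \<in> W" for w
    proof -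
      have "rst K (g w) \<in> v" using D_rep[OF wpl[OF that] v _ gw[OF that] sf(1,3)] W that by auto
      then have "rst K (g w) \<in> place_of K f0" using place_rep[OF v f0] by simp
      then show ?thesis unfolding place_of_def rst_def by auto
    qed
    have dist: "g w' \<notin> place_of L (g w)" if "w \<in> W" "w' \<in> W - {w}" for w w'
    proof
      assume "g w' \<in> place_of L (g w)"
      then have "g w' \<in> w" using place_rep[OF wpl[OF that(1)] gw[OF that(1)]] by simp
      then have "w = place_of L (g w')" using place_rep[OF wpl[OF that(1)]] by blast
      moreover have "w' = place_of L (g w')" using place_rep[OF wpl gw] that by auto
      ultimately show False using that by auto
    qed
    have "\<forall>w\<in>W. \<exists>z\<in>L. g w z > 1 \<and> (\<forall>w'\<in>W - {w}. g w' z < 1)"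
    proof
      fix w assume w: "w \<in> W"
      show "\<exists>z\<in>L. g w z > 1 \<and> (\<forall>w'\<in>W - {w}. g w' z < 1)"
        using lemmaC[OF sf(2) ag[OF w], of "W - {w}" g] W(2) ag dist[OF w] by auto
    qed
    then obtain z where z: "\<And>w. w \<in> W \<Longrightarrow> z w \<in> L \<and> g w (z w) > 1 \<and> (\<forall>w'\<in>W - {w}. g w' (z w) < 1)"
      by metis
    have zpos: "g w (z w') > 0" if "w \<in> W" "w' \<in> W" for w w'
    proof -
      have "z w' \<noteq> 0" using z[OF that(2)] av_zero[OF ag[OF that(2)]] by auto
      then show ?thesis using av_pos[OF ag[OF that(1)]] z[OF that(2)] by blast
    qed
    have "eventually (\<lambda>r. \<forall>w\<in>W. (\<Sum>w'\<in>W - {w}. g w (z w') ^ r) < 1) sequentially"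
    proof (rule eventually_ball_finite[OF W(2)], rule ballI)
      fix w assume w: "w \<in> W"
      have "(\<lambda>r. \<Sum>w'\<in>W - {w}. g w (z w') ^ r) \<longlonglongrightarrow> (\<Sum>w'\<in>W - {w}. 0)"
      proof (rule tendsto_sum)
        fix w' assume "w' \<in> W - {w}"
        then have "g w (z w') < 1" "g w (z w') > 0" using z zpos w by auto
        then show "(\<lambda>r. g w (z w') ^ r) \<longlonglongrightarrow> 0" by (intro LIMSEQ_power_zero) simp
      qed
      then show "eventually (\<lambda>r. (\<Sum>w'\<in>W - {w}. g w (z w') ^ r) < 1) sequentially"
        by (intro order_tendstoD(2)) auto
    qed
    then obtain r where r: "\<And>w. w \<in> W \<Longrightarrow> (\<Sum>w'\<in>W - {w}. g w (z w') ^ r) < 1"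
      using ev_get by blast
    define y where "y w = z w ^ r" for w
    have yL: "y w \<in> L" if "w \<in> W" for w unfolding y_def using sf_power[OF sf(2)] z[OF that] by blast
    obtain a where a: "\<forall>w\<in>W. a w \<in> K" "\<exists>w\<in>W. a w \<noteq> 0" "(\<Sum>w\<in>W. a w * y w) = 0"
      using dep_kspan[OF B(1) sf(1) W(2) big, of y] yL B(3) by blast
    define m where "m = Max ((\<lambda>w. f0 (a w)) ` W)"
    have Wne: "W \<noteq> {}" using a(2) by blast
    have "m \<in> (\<lambda>w. f0 (a w)) ` W" unfolding m_def using W(2) Wne by (intro Max_in) auto
    then obtain w0 where w0: "w0 \<in> W" "f0 (a w0) = m" by auto
    have mge: "f0 (a w) \<le> m" if "w \<in> W" for w unfolding m_def using W(2) that by (intro Max_ge) auto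
    obtain w1 where w1: "w1 \<in> W" "a w1 \<noteq> 0" using a(2) by blast
    have "f0 (a w1) > 0" using av_pos[OF af0] a(1) w1 by blast
    then have mpos: "m > 0" using mge[OF w1(1)] by simp
    have aw0: "a w0 \<noteq> 0" using w0 mpos av_zero[OF af0] by auto
    define G where "G = g w0"
    obtain t0 where t0: "t0 > 0" "\<forall>x\<in>K. G x = f0 x powr t0" using gK[OF w0(1)] unfolding G_def by blast
    have aG: "abs_val L G" unfolding G_def using ag[OF w0(1)] .
    have aK: "a w \<in> L" if "w \<in> W" for w using a(1) that sf(3) by blast
    have Gle: "G (a w) \<le> G (a w0)" if "w \<in> W" for w
    proof -
      have e: "G (a w) = f0 (a w) powr t0" "G (a w0) = f0 (a w0) powr t0" using t0(2) a(1) that w0(1) by auto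
      have "f0 (a w) powr t0 \<le> f0 (a w0) powr t0"
        using powr_mono2[of t0 "f0 (a w)" "f0 (a w0)"] t0(1) av_nonneg[OF af0] mge[OF that] w0(2) by simp
      then show ?thesis using e by simp
    qed
    have Ga0: "G (a w0) > 0" using av_pos[OF aG aK[OF w0(1)] aw0] .
    have "(\<Sum>w\<in>W. a w * y w) = a w0 * y w0 + (\<Sum>w\<in>W - {w0}. a w * y w)"
      using W(2) w0(1) by (simp add: sum.remove)
    then have eq: "a w0 * y w0 = - (\<Sum>w\<in>W - {w0}. a w * y w)" using a(3) by (simp add: eq_neg_iff_add_eq_0)
    have mL: "a w * y w \<in> L" if "w \<in> W - {w0}" for w using sf_mult[OF sf(2) aK yL] that by simp
    have inL: "(\<Sum>w\<in>W - {w0}. a w * y w) \<in> L" by (rule sf_sum[OF sf(2) mL])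
    have "G (a w0) * G (y w0) = G (a w0 * y w0)" using av_mult[OF aG aK[OF w0(1)] yL[OF w0(1)]] by simp
    also have "\<dots> = G (\<Sum>w\<in>W - {w0}. a w * y w)" unfolding eq using av_uminus[OF aG sf(2) inL] .
    also have "\<dots> \<le> (\<Sum>w\<in>W - {w0}. G (a w * y w))"
      by (rule av_sum[OF aG sf(2) mL])
    also have "\<dots> = (\<Sum>w\<in>W - {w0}. G (a w) * G (y w))"
    proof (rule sum.cong[OF refl])
      fix w assume "w \<in> W - {w0}"
      then show "G (a w * y w) = G (a w) * G (y w)" using av_mult[OF aG aK yL] by simp
    qed
    also have "\<dots> \<le> (\<Sum>w\<in>W - {w0}. G (a w0) * G (y w))"
    proof (rule sum_mono)
      fix w assume "w \<in> W - {w0}"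
      then show "G (a w) * G (y w) \<le> G (a w0) * G (y w)" using Gle av_nonneg[OF aG] by (intro mult_right_mono) auto
    qed
    also have "\<dots> = G (a w0) * (\<Sum>w\<in>W - {w0}. G (y w))" by (simp add: sum_distrib_left)
    finally have "G (y w0) \<le> (\<Sum>w\<in>W - {w0}. G (y w))" using Ga0 by simp
    also have "\<dots> = (\<Sum>w\<in>W - {w0}. g w0 (z w) ^ r)"
    proof (rule sum.cong[OF refl])
      fix w assume "w \<in> W - {w0}"
      then show "G (y w) = g w0 (z w) ^ r" unfolding y_def G_def using av_power[OF ag[OF w0(1)] sf(2)] z by simp
    qed
    also have "\<dots> < 1" using r[OF w0(1)] .
    finally have "G (y w0) < 1" .
    moreover have "G (y w0) = g w0 (z w0) ^ r" unfolding y_def G_def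
      using av_power[OF ag[OF w0(1)] sf(2)] z[OF w0(1)] by blast
    moreover have "g w0 (z w0) ^ r \<ge> 1" using z[OF w0(1)] by simp
    ultimately show False by simp
  qed

theorem finite_above:
  assumes ext: "finite_ext K L" and v: "v \<in> places K"
  shows "finite {w \<in> places L. place_divides K w v}"
proof (rule ccontr)
  let ?X = "{w \<in> places L. place_divides K w v}"
  assume inf: "infinite ?X"
  from ext obtain B where B: "finite B" "B \<subseteq> L" "L \<subseteq> kspan K B" and sf: "subfield K" "subfield L" "K \<subseteq> L"
    unfolding finite_ext_kspan by blast
  obtain W where W: "finite W" "W \<subseteq> ?X" "card W = card B + 1"
    using infinite_arbitrarily_large[OF inf] by blast
  have "card W \<le> card B" using card_above[OF B sf v W(2,1)] .
  then show False using W(3) by simp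
qed



definition XX :: "complex set \<Rightarrow> complex set \<Rightarrow> (complex \<Rightarrow> real) set \<Rightarrow> (complex \<Rightarrow> real) set set" where
  "XX K L v = {w \<in> places L. place_divides K w v}"

lemma JJ_mem: "(K, v) \<in> JJ F S \<longleftrightarrow> finite_ext F K \<and> v \<in> places K \<and> (\<exists>u\<in>S. place_divides F v u)"
  by (simp add: JJ_def M_def)

lemma cons_iff: "consistent F S c \<longleftrightarrow> (\<forall>K v L. (K, v) \<in> JJ F S \<and> finite_ext K L \<longrightarrow>
        c (K, v) = (\<Sum>w\<in>XX K L v. c (L, w)))"
  unfolding consistent_def XX_def by simp

lemma ext_sub: "finite_ext K L \<Longrightarrow> subfield K \<and> subfield L \<and> K \<subseteq> L"
  unfolding finite_ext_def by blast

lemma regroup: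
  assumes e1: "finite_ext K Z" and e2: "finite_ext Z N" and v: "v \<in> places K"
  shows "(\<Sum>y\<in>XX K Z v. \<Sum>x\<in>XX Z N y. f x) = (\<Sum>x\<in>XX K N v. f x)"
proof -
  have s1: "subfield K" "subfield Z" "K \<subseteq> Z" using ext_sub[OF e1] by auto
  have s2: "subfield N" "Z \<subseteq> N" using ext_sub[OF e2] by auto
  have fin1: "finite (XX K Z v)" unfolding XX_def using finite_above[OF e1 v] .
  have fin2: "\<forall>y\<in>XX K Z v. finite (XX Z N y)" unfolding XX_def using finite_above[OF e2] by auto
  have disj: "\<forall>y\<in>XX K Z v. \<forall>y'\<in>XX K Z v. y \<noteq> y' \<longrightarrow> XX Z N y \<inter> XX Z N y' = {}"
    unfolding XX_def using D_uniq[OF _ _ _ _ _ s1(2) s2(2)] by blast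
  have un: "(\<Union>y\<in>XX K Z v. XX Z N y) = XX K N v"
  proof (intro set_eqI iffI)
    fix x assume "x \<in> (\<Union>y\<in>XX K Z v. XX Z N y)"
    then obtain y where y: "y \<in> places Z" "place_divides K y v" "x \<in> places N" "place_divides Z x y"
      unfolding XX_def by blast
    then have "place_divides K x v" using D_trans[OF y(3) y(1) v y(4) y(2) s1 s2(2)] by blast
    then show "x \<in> XX K N v" unfolding XX_def using y by blast
  next
    fix x assume "x \<in> XX K N v"
    then have x: "x \<in> places N" "place_divides K x v" unfolding XX_def by auto
    obtain u where "u \<in> places Z" "place_divides Z x u" "place_divides K u v"
      using D_below[OF x(1) v x(2) s1(1,2,3) s2(2)] by blast
    then show "x \<in> (\<Union>y\<in>XX K Z v. XX Z N y)" unfolding XX_def using x by blast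
  qed
  show ?thesis using sum.UNION_disjoint[OF fin1 fin2 disj, of f] un by simp
qed

context
  fixes S :: "(complex \<Rightarrow> real) set set" and F :: "complex set"
  assumes S: "S \<subseteq> places \<rat>" and F: "number_field F"
begin

lemma sfF: "subfield F" using nf_subfield[OF F] .
lemma QF: "\<rat> \<subseteq> F" using sf_Rats[OF sfF] .

lemma JJFT: "(K, v) \<in> JJ F (M \<rat> F S) \<longleftrightarrow> (K, v) \<in> JJ \<rat> S \<and> F \<subseteq> K"
proof
  assume "(K, v) \<in> JJ F (M \<rat> F S)"
  then obtain u s where h: "finite_ext F K" "v \<in> places K" "u \<in> places F" "place_divides F v u"
    "s \<in> S" "place_divides \<rat> u s"
    unfolding JJ_mem M_def by blast
  have nK: "number_field K" using nf_ext[OF F h(1)] .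
  have "place_divides \<rat> v s"
    using D_trans[OF h(2) h(3) _ h(4) h(6) sf_Rats_sf sfF QF] ext_sub[OF h(1)] S h(5) by blast
  then show "(K, v) \<in> JJ \<rat> S \<and> F \<subseteq> K" using nK h ext_sub[OF h(1)]
    unfolding JJ_mem number_field_def by blast
next
  assume "(K, v) \<in> JJ \<rat> S \<and> F \<subseteq> K"
  then obtain s where h: "number_field K" "v \<in> places K" "s \<in> S" "place_divides \<rat> v s" "F \<subseteq> K"
    unfolding JJ_mem number_field_def by blast
  have sK: "subfield K" using nf_subfield[OF h(1)] .
  have e: "finite_ext F K" using ext_down[OF h(1)[unfolded number_field_def] sfF QF h(5)] .
  obtain u where "u \<in> places F" "place_divides F v u" "place_divides \<rat> u s"
    using D_below[OF h(2) _ h(4) sf_Rats_sf sfF QF h(5)] S h(3) by blast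
  then show "(K, v) \<in> JJ F (M \<rat> F S)" unfolding JJ_mem M_def using e h by blast
qed

lemma JJ_up:
  assumes "(K, v) \<in> JJ \<rat> S" "finite_ext K L" "w \<in> XX K L v"
  shows "(L, w) \<in> JJ \<rat> S"
proof -
  obtain s where h: "number_field K" "v \<in> places K" "s \<in> S" "place_divides \<rat> v s"
    using assms(1) unfolding JJ_mem number_field_def by blast
  have w: "w \<in> places L" "place_divides K w v" using assms(3) unfolding XX_def by auto
  have sK: "subfield K" using nf_subfield[OF h(1)] .
  have "place_divides \<rat> w s"
    using D_trans[OF w(1) h(2) _ w(2) h(4) sf_Rats_sf sK sf_Rats[OF sK]] ext_sub[OF assms(2)] S h(3) by blast
  then show ?thesis using nf_ext[OF h(1) assms(2)] w h(3) unfolding JJ_mem number_field_def by blast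
qed

lemma JJ_nf: "(K, v) \<in> JJ \<rat> S \<Longrightarrow> number_field K \<and> v \<in> places K"
  unfolding JJ_mem number_field_def by blast

end



theorem theorem5p2:
  fixes S :: "(complex \<Rightarrow> real) set set" and F :: "complex set"
  assumes "S \<noteq> {}" and "S \<subseteq> places \<rat>" and "number_field F"
  defines "T \<equiv> M \<rat> F S"
  shows "bij_betw (restr F T) (Jstar \<rat> S) (Jstar F T)
    \<and> (\<forall>c\<in>Jstar \<rat> S. \<forall>d\<in>Jstar \<rat> S. restr F T (\<lambda>p. c p + d p) = (\<lambda>p. restr F T c p + restr F T d p))
    \<and> (\<forall>a::real. \<forall>c\<in>Jstar \<rat> S. restr F T (\<lambda>p. a * c p) = (\<lambda>p. a * restr F T c p))"
proof -
  note S = assms(2) and F = assms(3)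
  have JT: "(K, v) \<in> JJ F T \<longleftrightarrow> (K, v) \<in> JJ \<rat> S \<and> F \<subseteq> K" for K v
    unfolding T_def using JJFT[OF S F] .
  have JTp: "p \<in> JJ F T \<longleftrightarrow> p \<in> JJ \<rat> S \<and> F \<subseteq> fst p" for p
    using JT[of "fst p" "snd p"] by simp
  have up: "(L, w) \<in> JJ \<rat> S" if "(K, v) \<in> JJ \<rat> S" "finite_ext K L" "w \<in> XX K L v" for K v L w
    using JJ_up[OF S F that] .
  have Rc: "restr F T c p = c p" if "p \<in> JJ F T" for c p unfolding restr_def using that by simp
  have compJ: "(compf F K, w) \<in> JJ F T" if "(K, v) \<in> JJ \<rat> S" "w \<in> XX K (compf F K) v" for K v w
  proof -
    have nK: "number_field K" using JJ_nf[OF S F that(1)] by blast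
    have "(compf F K, w) \<in> JJ \<rat> S" using up[OF that(1) nf_comp(3)[OF F nK] that(2)] .
    then show ?thesis using JT compf_basic(3) by blast
  qed
  have into: "restr F T c \<in> Jstar F T" if c: "c \<in> Jstar \<rat> S" for c
  proof -
    have cc: "consistent \<rat> S c" using c unfolding Jstar_def by blast
    have "consistent F T (restr F T c)"
      unfolding cons_iff
    proof (intro allI impI, elim conjE)
      fix K v L assume Kv: "(K, v) \<in> JJ F T" and e: "finite_ext K L"
      have Kv': "(K, v) \<in> JJ \<rat> S" "F \<subseteq> K" using Kv JT by auto
      have "restr F T c (K, v) = c (K, v)" using Rc[OF Kv] .
      also have "\<dots> = (\<Sum>w\<in>XX K L v. c (L, w))" using cc Kv'(1) e unfolding cons_iff by blast
      also have "\<dots> = (\<Sum>w\<in>XX K L v. restr F T c (L, w))"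
      proof (rule sum.cong[OF refl])
        fix w assume w: "w \<in> XX K L v"
        have "(L, w) \<in> JJ F T" using JT up[OF Kv'(1) e w] Kv'(2) ext_sub[OF e] by blast
        then show "c (L, w) = restr F T c (L, w)" using Rc by simp
      qed
      finally show "restr F T c (K, v) = (\<Sum>w\<in>XX K L v. restr F T c (L, w))" .
    qed
    moreover have "\<forall>p. p \<notin> JJ F T \<longrightarrow> restr F T c p = 0" unfolding restr_def by simp
    ultimately show ?thesis unfolding Jstar_def by blast
  qed
  have inj: "inj_on (restr F T) (Jstar \<rat> S)"
  proof (rule inj_onI)
    fix c d assume c: "c \<in> Jstar \<rat> S" and d: "d \<in> Jstar \<rat> S" and eq: "restr F T c = restr F T d"
    show "c = d"
    proof (rule ext)
      fix p
      show "c p = d p"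
      proof (cases "p \<in> JJ \<rat> S")
        case False
        have c0: "\<forall>p. p \<notin> JJ \<rat> S \<longrightarrow> c p = 0" and d0: "\<forall>p. p \<notin> JJ \<rat> S \<longrightarrow> d p = 0"
          using c d unfolding Jstar_def by simp_all
        have "c p = 0" "d p = 0" using mp[OF spec[OF c0] False] mp[OF spec[OF d0] False] by simp_all
        then show ?thesis by simp
      next
        case True
        obtain K v where p: "p = (K, v)" by (cases p)
        have Kv: "(K, v) \<in> JJ \<rat> S" using True p by simp
        have nK: "number_field K" using JJ_nf[OF S F Kv] by blast
        have e: "finite_ext K (compf F K)" using nf_comp(3)[OF F nK] .
        have cc: "consistent \<rat> S c" "consistent \<rat> S d" using c d unfolding Jstar_def by simp_all
        have cons: "f (K, v) = (\<Sum>w\<in>XX K (compf F K) v. f (compf F K, w))" if "consistent \<rat> S f" for f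
          using that Kv e unfolding cons_iff by blast
        have "c (K, v) = (\<Sum>w\<in>XX K (compf F K) v. c (compf F K, w))" using cons[OF cc(1)] .
        also have "\<dots> = (\<Sum>w\<in>XX K (compf F K) v. d (compf F K, w))"
        proof (rule sum.cong[OF refl])
          fix w assume w: "w \<in> XX K (compf F K) v"
          have "(compf F K, w) \<in> JJ F T" using compJ[OF Kv w] .
          then show "c (compf F K, w) = d (compf F K, w)" using Rc[of _ c] Rc[of _ d] eq by simp
        qed
        also have "\<dots> = d (K, v)" using cons[OF cc(2)] by simp
        finally show ?thesis using p by simp
      qed
    qed
  qed
  have surj: "d \<in> restr F T ` Jstar \<rat> S" if d: "d \<in> Jstar F T" for d
  proof -
    have dc: "consistent F T d" and d0: "\<And>p. p \<notin> JJ F T \<Longrightarrow> d p = 0" using d unfolding Jstar_def by auto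
    define c where "c p = (if p \<in> JJ \<rat> S then
        (\<Sum>x\<in>XX (fst p) (compf F (fst p)) (snd p). d (compf F (fst p), x)) else 0)" for p
    have cKv: "c (K, v) = (\<Sum>x\<in>XX K (compf F K) v. d (compf F K, x))" if "(K, v) \<in> JJ \<rat> S" for K v
      unfolding c_def using that by simp
    have "consistent \<rat> S c"
      unfolding cons_iff
    proof (intro allI impI, elim conjE)
      fix K v L assume Kv: "(K, v) \<in> JJ \<rat> S" and e: "finite_ext K L"
      have nK: "number_field K" and v: "v \<in> places K" using JJ_nf[OF S F Kv] by auto
      have nL: "number_field L" using nf_ext[OF nK e] .
      define CK where "CK = compf F K"
      define CL where "CL = compf F L"
      have eK: "finite_ext K CK" unfolding CK_def using nf_comp(3)[OF F nK] .
      have eL: "finite_ext L CL" unfolding CL_def using nf_comp(3)[OF F nL] .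
      have eKL: "finite_ext CK CL" unfolding CK_def CL_def using compf_ext_mono[OF F nK e] .
      have "c (K, v) = (\<Sum>y\<in>XX K CK v. d (CK, y))" using cKv[OF Kv] CK_def by simp
      also have "\<dots> = (\<Sum>y\<in>XX K CK v. \<Sum>x\<in>XX CK CL y. d (CL, x))"
      proof (rule sum.cong[OF refl])
        fix y assume y: "y \<in> XX K CK v"
        have "(CK, y) \<in> JJ F T" using compJ[OF Kv] y unfolding CK_def by blast
        then show "d (CK, y) = (\<Sum>x\<in>XX CK CL y. d (CL, x))" using dc eKL unfolding cons_iff by blast
      qed
      also have "\<dots> = (\<Sum>x\<in>XX K CL v. d (CL, x))" using regroup[OF eK eKL v] .
      also have "\<dots> = (\<Sum>w\<in>XX K L v. \<Sum>x\<in>XX L CL w. d (CL, x))" using regroup[OF e eL v, of "\<lambda>x. d (CL, x)"] by simp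
      also have "\<dots> = (\<Sum>w\<in>XX K L v. c (L, w))"
      proof (rule sum.cong[OF refl])
        fix w assume w: "w \<in> XX K L v"
        show "(\<Sum>x\<in>XX L CL w. d (CL, x)) = c (L, w)" using cKv[OF up[OF Kv e w]] CL_def by simp
      qed
      finally show "c (K, v) = (\<Sum>w\<in>XX K L v. c (L, w))" .
    qed
    moreover have "\<forall>p. p \<notin> JJ \<rat> S \<longrightarrow> c p = 0" unfolding c_def by simp
    ultimately have cJ: "c \<in> Jstar \<rat> S" unfolding Jstar_def by blast
    have "restr F T c = d"
    proof (rule ext)
      fix p
      show "restr F T c p = d p"
      proof (cases "p \<in> JJ F T")
        case False then show ?thesis using d0 unfolding restr_def by simp
      next
        case True
        obtain K v where p: "p = (K, v)" by (cases p)
        have Kv: "(K, v) \<in> JJ \<rat> S" "F \<subseteq> K" using True p JT by auto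
        have nK: "number_field K" and v: "v \<in> places K" using JJ_nf[OF S F Kv(1)] by auto
        have CK: "compf F K = K" using compf_sub[OF nf_subfield[OF nK] Kv(2)] .
        have X: "XX K K v = {v}"
          unfolding XX_def using D_same[OF _ v _ nf_subfield[OF nK]] D_self[OF v] v by blast
        have "restr F T c p = c (K, v)" using Rc[OF True] p by simp
        also have "\<dots> = d (K, v)" using cKv[OF Kv(1)] CK X by simp
        finally show ?thesis using p by simp
      qed
    qed
    then show ?thesis using cJ by blast
  qed
  have "bij_betw (restr F T) (Jstar \<rat> S) (Jstar F T)"
    unfolding bij_betw_def using inj into surj by blast
  moreover have "\<forall>c\<in>Jstar \<rat> S. \<forall>d\<in>Jstar \<rat> S. restr F T (\<lambda>p. c p + d p) = (\<lambda>p. restr F T c p + restr F T d p)"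
    unfolding restr_def by auto
  moreover have "\<forall>a::real. \<forall>c\<in>Jstar \<rat> S. restr F T (\<lambda>p. a * c p) = (\<lambda>p. a * restr F T c p)"
    unfolding restr_def by auto
  ultimately show ?thesis by blast
qed

end
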